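(* Let $G$ be a Polish group and $\Gamma$ a countable abelian group, and identify $\Gamma$ with the subgroup $\Gamma\times\{0\}$ of $\Gamma\times\mathbb{Z}$. Assume that for a dense set of $\pi \in \mathrm{Hom}(\Gamma \times \mathbb{Z}, G)$ one has $\overline{\pi(\Gamma \times \mathbb{Z})} = \overline{\pi(\Gamma)}$. Then the restriction map $\mathrm{Res} \colon \mathrm{Hom}(\Gamma \times \mathbb{Z}, G) \to \mathrm{Hom}(\Gamma, G)$ is category-preserving.
   Context: $\mathrm{Hom}(\Lambda,G)$ is the space of homomorphisms $\Lambda\to G$ with the topology from $G^\Lambda$. A continuous map $f\colon X\to Y$ between Polish spaces is category-preserving if $f^{-1}(A)$ is comeager in $X$ whenever $A$ is comeager in $Y$. *)

theory Defs
  imports "HOL-Analysis.Analysis" "HOL-Library.Product_Plus"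
begin

definition Polish_space :: "'a topology \<Rightarrow> bool" where
  "Polish_space X \<longleftrightarrow> completely_metrizable_space X \<and> separable_space X"

definition nowhere_dense_in :: "'a topology \<Rightarrow> 'a set \<Rightarrow> bool" where
  "nowhere_dense_in X S \<longleftrightarrow> S \<subseteq> topspace X \<and> X interior_of (X closure_of S) = {}"

definition meager_in :: "'a topology \<Rightarrow> 'a set \<Rightarrow> bool" where
  "meager_in X S \<longleftrightarrow> (\<exists>\<F>. countable \<F> \<and> (\<forall>T\<in>\<F>. nowhere_dense_in X T) \<and> S \<subseteq> \<Union>\<F>)"

definition comeager_in :: "'a topology \<Rightarrow> 'a set \<Rightarrow> bool" where
  "comeager_in X A \<longleftrightarrow> A \<subseteq> topspace X \<and> meager_in X (topspace X - A)"

definition category_preserving :: "'a topology \<Rightarrow> 'b topology \<Rightarrow> ('a \<Rightarrow> 'b) \<Rightarrow> bool" where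
  "category_preserving X Y f \<longleftrightarrow> continuous_map X Y f \<and>
     (\<forall>A. comeager_in Y A \<longrightarrow> comeager_in X {x \<in> topspace X. f x \<in> A})"

definition group_hom :: "('a::group_add \<Rightarrow> 'b::group_add) \<Rightarrow> bool" where
  "group_hom f \<longleftrightarrow> (\<forall>x y. f (x + y) = f x + f y)"

definition Hom_top :: "('a::group_add \<Rightarrow> 'b::topological_group_add) topology" where
  "Hom_top = subtopology (product_topology (\<lambda>_. euclidean) UNIV) {f. group_hom f}"

definition Res :: "('c::ab_group_add \<times> int \<Rightarrow> 'g) \<Rightarrow> ('c \<Rightarrow> 'g)" where
  "Res \<pi> = (\<lambda>\<gamma>. \<pi> (\<gamma>, 0))"

end

theory Submission imports Defs begin


lemma nowhere_dense_preimage: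
  assumes f: "continuous_map X Y f"
    and op: "\<And>U. openin X U \<Longrightarrow> U \<noteq> {} \<Longrightarrow> Y interior_of (f ` U) \<noteq> {}"
    and N: "nowhere_dense_in Y N"
  shows "nowhere_dense_in X {x \<in> topspace X. f x \<in> N}"
proof -
  let ?P = "{x \<in> topspace X. f x \<in> N}"
  let ?C = "Y closure_of N"
  let ?I = "X interior_of (X closure_of ?P)"
  have Nsub: "N \<subseteq> topspace Y" and Nint: "Y interior_of ?C = {}"
    using N unfolding nowhere_dense_in_def by auto
  have cl: "closedin X {x \<in> topspace X. f x \<in> ?C}"
    by (rule closedin_continuous_map_preimage[OF f closedin_closure_of])
  have NC: "N \<subseteq> ?C" by (rule closure_of_subset[OF Nsub])
  have "?P \<subseteq> {x \<in> topspace X. f x \<in> ?C}" using NC by auto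
  hence "X closure_of ?P \<subseteq> {x \<in> topspace X. f x \<in> ?C}"
    by (rule closure_of_minimal[OF _ cl])
  hence sub: "?I \<subseteq> {x \<in> topspace X. f x \<in> ?C}"
    by (rule order_trans[OF interior_of_subset])
  have "?I = {}"
  proof (rule ccontr)
    assume ne: "?I \<noteq> {}"
    have "f ` ?I \<subseteq> ?C" using sub by auto
    hence "Y interior_of (f ` ?I) \<subseteq> Y interior_of ?C"
      by (rule interior_of_mono)
    hence "Y interior_of (f ` ?I) = {}" using Nint by auto
    thus False using op[OF openin_interior_of ne] by auto
  qed
  moreover have "?P \<subseteq> topspace X" by auto
  ultimately show ?thesis unfolding nowhere_dense_in_def by auto
qed

lemma category_preserving_if_open:
  assumes f: "continuous_map X Y f"
    and op: "\<And>U. openin X U \<Longrightarrow> U \<noteq> {} \<Longrightarrow> Y interior_of (f ` U) \<noteq> {}"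
  shows "category_preserving X Y f"
  unfolding category_preserving_def
proof (intro conjI allI impI f)
  fix A assume A: "comeager_in Y A"
  then obtain F where F: "countable F" "\<forall>T\<in>F. nowhere_dense_in Y T" "topspace Y - A \<subseteq> \<Union>F"
    unfolding comeager_in_def meager_in_def by blast
  let ?G = "(\<lambda>T. {x \<in> topspace X. f x \<in> T}) ` F"
  have c: "countable ?G" using F(1) by (rule countable_image)
  have nd: "\<forall>T\<in>?G. nowhere_dense_in X T"
  proof
    fix S assume "S \<in> ?G"
    then obtain T where T: "T \<in> F" "S = {x \<in> topspace X. f x \<in> T}" by blast
    show "nowhere_dense_in X S" unfolding T(2)
      by (rule nowhere_dense_preimage[OF f op]) (use T(1) F(2) in auto)
  qed
  have cov: "topspace X - {x \<in> topspace X. f x \<in> A} \<subseteq> \<Union>?G"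
  proof
    fix x assume x: "x \<in> topspace X - {x \<in> topspace X. f x \<in> A}"
    have "f x \<in> topspace Y" using x continuous_map_image_subset_topspace[OF f] by auto
    hence "f x \<in> \<Union>F" using x F(3) by auto
    then obtain T where T: "T \<in> F" "f x \<in> T" by auto
    hence "x \<in> {x \<in> topspace X. f x \<in> T}" using x by auto
    thus "x \<in> \<Union>?G" using T(1) by auto
  qed
  have "{x \<in> topspace X. f x \<in> A} \<subseteq> topspace X" by auto
  thus "comeager_in X {x \<in> topspace X. f x \<in> A}"
    unfolding comeager_in_def meager_in_def using c nd cov by blast
qed

definition pw :: "nat \<Rightarrow> 'a::group_add \<Rightarrow> 'a" where "pw k x = ((+) x ^^ k) 0"

lemma pw_0[simp]: "pw 0 x = 0" and pw_Suc: "pw (Suc k) x = x + pw k x"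
  by (simp_all add: pw_def)

lemma pw_add: "pw (a + b) x = pw a x + pw b x"
  by (induction a) (simp_all add: pw_Suc add.assoc)

lemma pw_ab_add: "pw k ((x::'a::ab_group_add) + y) = pw k x + pw k y"
  by (induction k) (simp_all add: pw_Suc algebra_simps)

definition zmul :: "int \<Rightarrow> 'a::group_add \<Rightarrow> 'a" where
  "zmul n x = pw (nat n) x - pw (nat (-n)) x"

lemma zmul_0[simp]: "zmul 0 x = 0" by (simp add: zmul_def)

lemma zmul_add_ab: "zmul (m + n) (x::'a::ab_group_add) = zmul m x + zmul n x"
proof -
  have key: "\<And>a b c d. a + d = c + b \<Longrightarrow> pw a x - pw b x = pw c x - pw d x"
  proof -
    fix a b c d :: nat assume "a + d = c + b"
    hence "pw a x + pw d x = pw c x + pw b x" by (metis pw_add)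
    thus "pw a x - pw b x = pw c x - pw d x" by (simp add: algebra_simps)
  qed
  have "zmul m x + zmul n x = pw (nat m + nat n) x - pw (nat (-m) + nat (-n)) x"
    by (simp add: zmul_def pw_add algebra_simps)
  also have "\<dots> = zmul (m + n) x" unfolding zmul_def
    by (rule key) linarith
  finally show ?thesis ..
qed

lemma zmul_pair: "zmul n ((a, b) :: 'a::group_add \<times> 'b::group_add) = (zmul n a, zmul n b)"
proof -
  have "\<And>k. pw k (a, b) = (pw k a, pw k b)"
    subgoal for k by (induction k) (simp_all add: pw_Suc zero_prod_def)
    done
  thus ?thesis by (simp add: zmul_def)
qed

lemma pw_int1: "pw k (1::int) = int k"
  by (induction k) (simp_all add: pw_Suc)

lemma zmul_int1: "zmul n (1::int) = n"
  by (simp add: zmul_def pw_int1)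

lemma zmul_zero: "zmul n (0::'a::group_add) = 0"
proof -
  have "\<And>k. pw k (0::'a) = 0" subgoal for k by (induction k) (simp_all add: pw_Suc) done
  thus ?thesis by (simp add: zmul_def)
qed

lemma hom_0: "group_hom f \<Longrightarrow> f 0 = 0"
proof -
  assume "group_hom f"
  hence h: "f (0 + 0) = f 0 + f 0" unfolding group_hom_def by blast
  have "f 0 + 0 = f (0 + 0)" by simp
  also note h
  finally have "f 0 + 0 = f 0 + f 0" .
  hence "0 = f 0" by (rule add_left_imp_eq)
  thus ?thesis by (rule sym)
qed

lemma hom_diff: "group_hom f \<Longrightarrow> f (a - b) = f a - f b"
proof -
  assume "group_hom f"
  hence "f ((a - b) + b) = f (a - b) + f b" unfolding group_hom_def by blast
  hence "f a = f (a - b) + f b" by simp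
  thus ?thesis by (simp add: eq_diff_eq)
qed

lemma hom_zmul: "group_hom f \<Longrightarrow> f (zmul n x) = zmul n (f x)"
proof -
  assume h: "group_hom f"
  have "\<And>k. f (pw k x) = pw k (f x)"
    subgoal for k by (induction k) (use h in \<open>simp_all add: pw_Suc hom_0 group_hom_def\<close>) done
  thus ?thesis by (simp add: zmul_def hom_diff[OF h])
qed

lemma continuous_zmul: "continuous_on UNIV (\<lambda>x::'a::topological_group_add. zmul n x)"
proof -
  have "\<And>k. continuous_on UNIV (\<lambda>x::'a. pw k x)"
    subgoal for k by (induction k) (simp_all add: pw_Suc continuous_intros) done
  thus ?thesis unfolding zmul_def by (intro continuous_intros) auto
qed

lemma topspace_Hom_top: "topspace Hom_top = {f. group_hom f}"
  by (simp add: Hom_top_def)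

lemma continuous_map_coord_Hom: "continuous_map Hom_top euclidean (\<lambda>f. f k)"
  unfolding Hom_top_def
  by (rule continuous_map_from_subtopology) (metis continuous_map_product_projection UNIV_I)

lemma continuous_map_into_Hom:
  assumes "\<And>k. continuous_map X euclidean (\<lambda>x. F x k)" "\<And>x. x \<in> topspace X \<Longrightarrow> group_hom (F x)"
  shows "continuous_map X Hom_top F"
  unfolding Hom_top_def continuous_map_in_subtopology continuous_map_componentwise_UNIV
  using assms by auto

lemma Res_hom:
  fixes \<pi> :: "'c::ab_group_add \<times> int \<Rightarrow> 'g::group_add"
  shows "group_hom \<pi> \<Longrightarrow> group_hom (Res \<pi>)"
  unfolding group_hom_def Res_def
proof (intro allI)
  fix a b :: 'c
  assume h: "\<forall>x y. \<pi> (x + y) = \<pi> x + \<pi> y"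
  have "(a + b, 0::int) = (a, 0) + (b, 0)" by simp
  hence "\<pi> (a + b, 0) = \<pi> ((a, 0) + (b, 0))" by (rule arg_cong)
  also have "\<dots> = \<pi> (a, 0) + \<pi> (b, 0)" using h by blast
  finally show "\<pi> (a + b, 0) = \<pi> (a, 0) + \<pi> (b, 0)" .
qed

theorem lemma8p7:
  fixes G_witness :: "'g::topological_group_add itself"
    and \<Gamma>_witness :: "'c::{ab_group_add, countable} itself"
  assumes Polish: "Polish_space (euclidean :: 'g topology)"
    and dense: "\<exists>D. D \<subseteq> topspace (Hom_top :: ('c \<times> int \<Rightarrow> 'g) topology) \<and>
               Hom_top closure_of D = topspace (Hom_top :: ('c \<times> int \<Rightarrow> 'g) topology) \<and>
               (\<forall>\<pi>\<in>D. closure (range \<pi>) = closure (\<pi> ` (UNIV \<times> {0})))"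
  shows "category_preserving (Hom_top :: ('c \<times> int \<Rightarrow> 'g) topology)
           (Hom_top :: ('c \<Rightarrow> 'g) topology) Res"
proof (rule category_preserving_if_open)
  show "continuous_map (Hom_top :: ('c \<times> int \<Rightarrow> 'g) topology) Hom_top Res"
    by (rule continuous_map_into_Hom) (auto simp: Res_def continuous_map_coord_Hom topspace_Hom_top Res_hom[unfolded Res_def])
next
  fix U :: "('c \<times> int \<Rightarrow> 'g) set"
  assume U: "openin Hom_top U" and Une: "U \<noteq> {}"
  obtain D where D: "D \<subseteq> topspace (Hom_top :: ('c \<times> int \<Rightarrow> 'g) topology)"
    "Hom_top closure_of D = topspace (Hom_top :: ('c \<times> int \<Rightarrow> 'g) topology)"
    "\<forall>\<pi>\<in>D. closure (range \<pi>) = closure (\<pi> ` (UNIV \<times> {0}))"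
    using dense by blast
  have "U \<inter> D \<noteq> {}"
    using openin_Int_closure_of_eq_empty[OF U, of D] D(2) openin_subset[OF U] Une by auto
  then obtain \<pi> where \<pi>U: "\<pi> \<in> U" and \<pi>D: "\<pi> \<in> D" by blast
  have hom: "group_hom \<pi>" using \<pi>U openin_subset[OF U] by (auto simp: topspace_Hom_top)
  define \<rho> where "\<rho> = Res \<pi>"
  define g where "g = \<pi> (0, 1)"
  have \<rho>hom: "group_hom \<rho>" using Res_hom[OF hom] by (simp add: \<rho>_def)
  have \<pi>eq: "\<pi> p = \<rho> (fst p) + zmul (snd p) g" for p
  proof -
    have "p = (fst p, 0) + zmul (snd p) (0, 1)"
      by (simp add: zmul_pair zmul_zero zmul_int1)
    hence "\<pi> p = \<pi> ((fst p, 0) + zmul (snd p) (0, 1))" by (rule arg_cong)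
    also have "\<dots> = \<pi> (fst p, 0) + \<pi> (zmul (snd p) (0, 1))"
      using hom unfolding group_hom_def by blast
    finally show ?thesis by (simp add: hom_zmul[OF hom] \<rho>_def Res_def g_def)
  qed
  obtain U' where U': "openin (product_topology (\<lambda>_. euclidean) UNIV) U'"
    "U = U' \<inter> {f. group_hom f}"
    using U unfolding Hom_top_def openin_subtopology by blast
  define \<Psi> where "\<Psi> x = (\<lambda>p::'c \<times> int. \<rho> (fst p) + zmul (snd p) x)" for x
  have "continuous_map euclidean (product_topology (\<lambda>_. euclidean) UNIV) \<Psi>"
    unfolding continuous_map_componentwise_UNIV
  proof
    fix k :: "'c \<times> int"
    have "continuous_on UNIV (\<lambda>x. \<rho> (fst k) + zmul (snd k) x)"
      by (intro continuous_on_add continuous_on_const continuous_zmul)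
    thus "continuous_map euclidean euclidean (\<lambda>x. \<Psi> x k)"
      by (simp add: \<Psi>_def continuous_map_iff_continuous2)
  qed
  hence "openin euclidean {x \<in> topspace euclidean. \<Psi> x \<in> U'}"
    using openin_continuous_map_preimage U'(1) by blast
  hence Wo: "open {x. \<Psi> x \<in> U'}" by simp
  have "\<Psi> g = \<pi>" by (rule ext) (simp add: \<Psi>_def \<pi>eq)
  hence gW: "g \<in> {x. \<Psi> x \<in> U'}" using \<pi>U U'(2) by simp
  have "\<pi> ` (UNIV \<times> {0}) = range \<rho>" by (auto simp: \<rho>_def Res_def)
  hence "g \<in> closure (range \<rho>)"
    using D(3) \<pi>D closure_subset[of "range \<pi>"] by (auto simp: g_def)
  then obtain \<gamma> where \<gamma>: "\<rho> \<gamma> \<in> {x. \<Psi> x \<in> U'}"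
    using open_Int_closure_eq_empty[OF Wo, of "range \<rho>"] gW by blast
  define \<phi> where "\<phi> \<sigma> = (\<lambda>p::'c \<times> int. \<sigma> (fst p + zmul (snd p) \<gamma>))" for \<sigma> :: "'c \<Rightarrow> 'g"
  have \<phi>hom: "group_hom (\<phi> \<sigma>)" if "group_hom \<sigma>" for \<sigma>
    unfolding group_hom_def
  proof (intro allI)
    fix a b :: "'c \<times> int"
    have "fst (a + b) + zmul (snd (a + b)) \<gamma> = (fst a + zmul (snd a) \<gamma>) + (fst b + zmul (snd b) \<gamma>)"
      by (simp add: zmul_add_ab algebra_simps)
    hence "\<sigma> (fst (a + b) + zmul (snd (a + b)) \<gamma>) = \<sigma> ((fst a + zmul (snd a) \<gamma>) + (fst b + zmul (snd b) \<gamma>))"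
      by (rule arg_cong)
    also have "\<dots> = \<sigma> (fst a + zmul (snd a) \<gamma>) + \<sigma> (fst b + zmul (snd b) \<gamma>)"
      using that unfolding group_hom_def by blast
    finally show "\<phi> \<sigma> (a + b) = \<phi> \<sigma> a + \<phi> \<sigma> b"
      unfolding \<phi>_def .
  qed
  have \<phi>cont: "continuous_map Hom_top Hom_top \<phi>"
    by (rule continuous_map_into_Hom) (auto simp: \<phi>_def continuous_map_coord_Hom topspace_Hom_top \<phi>hom[unfolded \<phi>_def])
  have "\<phi> \<rho> = \<Psi> (\<rho> \<gamma>)"
    by (rule ext) (simp add: \<phi>_def \<Psi>_def \<rho>hom[unfolded group_hom_def] hom_zmul[OF \<rho>hom])
  hence \<phi>\<rho>U: "\<phi> \<rho> \<in> U" using \<gamma> U'(2) \<phi>hom[OF \<rho>hom] by simp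
  define V where "V = {\<sigma> \<in> topspace Hom_top. \<phi> \<sigma> \<in> U}"
  have Vo: "openin Hom_top V" unfolding V_def
    using openin_continuous_map_preimage[OF \<phi>cont U] .
  have \<rho>V: "\<rho> \<in> V" using \<phi>\<rho>U \<rho>hom by (simp add: V_def topspace_Hom_top)
  have "V \<subseteq> Res ` U"
  proof
    fix \<sigma> assume "\<sigma> \<in> V"
    hence "\<phi> \<sigma> \<in> U" by (simp add: V_def)
    moreover have "Res (\<phi> \<sigma>) = \<sigma>" by (rule ext) (simp add: Res_def \<phi>_def)
    ultimately show "\<sigma> \<in> Res ` U" by (metis imageI)
  qed
  hence "V \<subseteq> Hom_top interior_of (Res ` U)" using interior_of_maximal Vo by blast
  thus "Hom_top interior_of (Res ` U) \<noteq> {}" using \<rho>V by blast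
qed

end
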